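(* Let $\mathcal{G}$ be a graph with persuadable nodes $1,\ldots,n$ and zealots $n+1,\ldots,n+m$ (with fixed zealot opinions), with at least one zealot ($m\ge 1$), and suppose the persuadable subgraph $\mathcal{G}_{\mathcal{P}}$ (the subgraph induced by the persuadable nodes) is connected. Fix $\delta\ge 0$. Let $\bar{\mathbf{x}}\in\mathbb{R}^n$ be the unique steady state (vector of persuadable opinions) of the SBCM with $\gamma=0$ on $\mathcal{G}$. Then there exist $\epsilon>0$ and a unique $C^1$ function $\mathbf{h}:[0,\epsilon)\to\mathbb{R}^n$ such that: (1) $\mathbf{h}(0)=\bar{\mathbf{x}}$; (2) for all $\gamma\in[0,\epsilon)$, the SBCM with parameter $\gamma$ has a unique steady state $\mathbf{x}_\gamma\in\mathbb{R}^n$, and $\mathbf{h}(\gamma)=\mathbf{x}_\gamma$; (3) for all $\gamma\in[0,\epsilon)$, the steady state $\mathbf{x}_\gamma$ is linearly stable.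
   Context: Let $\mathcal{G}$ be a finite undirected unweighted graph without self-loops, with node set $\mathcal{N}$; write $i\sim j$ if nodes $i,j$ are adjacent. The nodes are partitioned into zealots $\mathcal{Z}$ and persuadable nodes $\mathcal{P}=\mathcal{N}\setminus\mathcal{Z}$. For $\gamma,\delta\ge 0$, the influence function is $w(x_i,x_j)=\frac{1}{1+e^{\gamma(x_i-x_j)^2-\gamma\delta}}$ if $i\sim j$ and $0$ otherwise. The SBCM is $\frac{dx_i}{dt}=f_i(\mathbf{x})=\frac{\sum_j w(x_i,x_j)(x_j-x_i)}{\sum_j w(x_i,x_j)}$ for $i\in\mathcal{P}$ and $\frac{dx_i}{dt}=0$ for $i\in\mathcal{Z}$, so zealot opinions stay fixed; a steady state is a vector of persuadable opinions making all $f_i$, $i\in\mathcal{P}$, vanish (zealot opinions held at their fixed values). A steady state is linearly stable if all eigenvalues of $\mathbf{J}_{\mathcal{P}}$, the matrix of partial derivatives $\partial f_i/\partial x_j$ with $i,j\in\mathcal{P}$ evaluated at the steady state, are strictly negative. *)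

theory Defs
  imports "HOL-Analysis.Analysis"
begin

text \<open>Nodes of the graph: persuadable nodes are the elements of the finite type 'n
 (so x :: real^'n is a vector in R^n), zealots are the elements of the finite type 'm
 (m = CARD('m) >= 1 automatically, since HOL types are nonempty).  A node is
 Inl i (persuadable) or Inr k (zealot).\<close>

definition simple_graph :: "('a \<Rightarrow> 'a \<Rightarrow> bool) \<Rightarrow> bool" where
  "simple_graph E \<longleftrightarrow> (\<forall>a b. E a b \<longrightarrow> E b a) \<and> (\<forall>a. \<not> E a a)"

definition persuadable_connected :: "('n + 'm \<Rightarrow> 'n + 'm \<Rightarrow> bool) \<Rightarrow> bool" where
  "persuadable_connected E \<longleftrightarrow>
     (\<forall>i j. (\<lambda>a b. E (Inl a) (Inl b))\<^sup>*\<^sup>* i j)"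

definition opinion :: "real^'n \<Rightarrow> ('m \<Rightarrow> real) \<Rightarrow> 'n + 'm \<Rightarrow> real" where
  "opinion x z v = (case v of Inl i \<Rightarrow> x $ i | Inr k \<Rightarrow> z k)"

definition influence :: "real \<Rightarrow> real \<Rightarrow> real \<Rightarrow> real \<Rightarrow> real" where
  "influence \<gamma> \<delta> a b = 1 / (1 + exp (\<gamma> * (a - b)\<^sup>2 - \<gamma> * \<delta>))"

definition wgt :: "('n + 'm \<Rightarrow> 'n + 'm \<Rightarrow> bool) \<Rightarrow> real \<Rightarrow> real \<Rightarrow>
    real^'n \<Rightarrow> ('m \<Rightarrow> real) \<Rightarrow> 'n + 'm \<Rightarrow> 'n + 'm \<Rightarrow> real" where
  "wgt E \<gamma> \<delta> x z u v =
     (if E u v then influence \<gamma> \<delta> (opinion x z u) (opinion x z v) else 0)"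

definition sbcm_f :: "('n::finite + 'm::finite \<Rightarrow> 'n + 'm \<Rightarrow> bool) \<Rightarrow> real \<Rightarrow> real \<Rightarrow>
    ('m \<Rightarrow> real) \<Rightarrow> real^'n \<Rightarrow> 'n \<Rightarrow> real" where
  "sbcm_f E \<gamma> \<delta> z x i =
     (\<Sum>v\<in>UNIV. wgt E \<gamma> \<delta> x z (Inl i) v * (opinion x z v - opinion x z (Inl i)))
     / (\<Sum>v\<in>UNIV. wgt E \<gamma> \<delta> x z (Inl i) v)"

definition steady_state :: "('n::finite + 'm::finite \<Rightarrow> 'n + 'm \<Rightarrow> bool) \<Rightarrow> real \<Rightarrow> real \<Rightarrow>
    ('m \<Rightarrow> real) \<Rightarrow> real^'n \<Rightarrow> bool" where
  "steady_state E \<gamma> \<delta> z x \<longleftrightarrow> (\<forall>i. sbcm_f E \<gamma> \<delta> z x i = 0)"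

definition jacobian_P :: "('n::finite + 'm::finite \<Rightarrow> 'n + 'm \<Rightarrow> bool) \<Rightarrow> real \<Rightarrow> real \<Rightarrow>
    ('m \<Rightarrow> real) \<Rightarrow> real^'n \<Rightarrow> real^'n^'n" where
  "jacobian_P E \<gamma> \<delta> z x =
     (\<chi> i j. deriv (\<lambda>t. sbcm_f E \<gamma> \<delta> z (\<chi> k. if k = j then t else x $ k) i) (x $ j))"

definition is_eigenvalue :: "real^'n^'n \<Rightarrow> complex \<Rightarrow> bool" where
  "is_eigenvalue A mu \<longleftrightarrow>
     (\<exists>v :: complex^'n. v \<noteq> 0 \<and> (\<chi> i j. complex_of_real (A $ i $ j)) *v v = mu *s v)"

definition linearly_stable :: "('n::finite + 'm::finite \<Rightarrow> 'n + 'm \<Rightarrow> bool) \<Rightarrow> real \<Rightarrow> real \<Rightarrow>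
    ('m \<Rightarrow> real) \<Rightarrow> real^'n \<Rightarrow> bool" where
  "linearly_stable E \<gamma> \<delta> z x \<longleftrightarrow>
     (\<forall>mu. is_eigenvalue (jacobian_P E \<gamma> \<delta> z x) mu \<longrightarrow> mu \<in> \<real> \<and> Re mu < 0)"

definition C1_on_Ico :: "real \<Rightarrow> (real \<Rightarrow> real^'n) \<Rightarrow> bool" where
  "C1_on_Ico \<epsilon> h \<longleftrightarrow>
     (\<exists>h'. (\<forall>t\<in>{0..<\<epsilon>}. (h has_vector_derivative h' t) (at t within {0..<\<epsilon>}))
          \<and> continuous_on {0..<\<epsilon>} h')"

end

theory Submission
  imports Defs
begin


definition ee :: "real \<Rightarrow> real \<Rightarrow> real \<Rightarrow> real" where
  "ee \<delta> \<gamma> s = exp (\<gamma> * s\<^sup>2 - \<gamma> * \<delta>)"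
definition ph :: "real \<Rightarrow> real \<Rightarrow> real \<Rightarrow> real" where
  "ph \<delta> \<gamma> s = s / (1 + ee \<delta> \<gamma> s)"
definition pd :: "real \<Rightarrow> real \<Rightarrow> real \<Rightarrow> real" where
  "pd \<delta> \<gamma> s = (1 + ee \<delta> \<gamma> s - 2 * \<gamma> * s\<^sup>2 * ee \<delta> \<gamma> s) / (1 + ee \<delta> \<gamma> s)\<^sup>2"
definition pg :: "real \<Rightarrow> real \<Rightarrow> real \<Rightarrow> real" where
  "pg \<delta> \<gamma> s = - s * (s\<^sup>2 - \<delta>) * ee \<delta> \<gamma> s / (1 + ee \<delta> \<gamma> s)\<^sup>2"

lemma ee_pos: "ee \<delta> \<gamma> s > 0" by (simp add: ee_def)

lemma ph_deriv: "((ph \<delta> \<gamma>) has_real_derivative pd \<delta> \<gamma> s) (at s within S)"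
proof -
  have ne: "1 + ee \<delta> \<gamma> s \<noteq> 0" using ee_pos[of \<delta> \<gamma> s] by linarith
  have "((\<lambda>s. s / (1 + exp (\<gamma> * s\<^sup>2 - \<gamma> * \<delta>))) has_real_derivative
     (1 * (1 + ee \<delta> \<gamma> s) - s * (exp (\<gamma> * s\<^sup>2 - \<gamma> * \<delta>) * (\<gamma> * (2 * s))))
        / (1 + ee \<delta> \<gamma> s)\<^sup>2) (at s within S)"
    using ne unfolding ee_def
    by (auto intro!: derivative_eq_intros simp: power2_eq_square)
  moreover have "(1 * (1 + ee \<delta> \<gamma> s) - s * (exp (\<gamma> * s\<^sup>2 - \<gamma> * \<delta>) * (\<gamma> * (2 * s))))
        / (1 + ee \<delta> \<gamma> s)\<^sup>2 = pd \<delta> \<gamma> s"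
    unfolding pd_def ee_def by (simp add: power2_eq_square algebra_simps)
  ultimately show ?thesis unfolding ph_def ee_def by simp
qed

lemma ph_deriv_gamma: "((\<lambda>\<gamma>. ph \<delta> \<gamma> s) has_real_derivative pg \<delta> \<gamma> s) (at \<gamma> within S)"
proof -
  have ne: "1 + ee \<delta> \<gamma> s \<noteq> 0" using ee_pos[of \<delta> \<gamma> s] by linarith
  have "((\<lambda>\<gamma>. s / (1 + exp (\<gamma> * s\<^sup>2 - \<gamma> * \<delta>))) has_real_derivative
     (0 * (1 + ee \<delta> \<gamma> s) - s * (exp (\<gamma> * s\<^sup>2 - \<gamma> * \<delta>) * (s\<^sup>2 - \<delta>)))
        / (1 + ee \<delta> \<gamma> s)\<^sup>2) (at \<gamma> within S)"
    using ne unfolding ee_def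
    by (auto intro!: derivative_eq_intros simp: power2_eq_square)
  moreover have "(0 * (1 + ee \<delta> \<gamma> s) - s * (exp (\<gamma> * s\<^sup>2 - \<gamma> * \<delta>) * (s\<^sup>2 - \<delta>)))
        / (1 + ee \<delta> \<gamma> s)\<^sup>2 = pg \<delta> \<gamma> s"
    unfolding pg_def ee_def by (simp add: power2_eq_square algebra_simps)
  ultimately show ?thesis unfolding ph_def ee_def by simp
qed

lemma ne1: "1 + exp (a::real) \<noteq> 0"
  using exp_gt_zero[of a] by linarith

lemma pd_cont: "continuous_on UNIV (\<lambda>q. pd \<delta> (fst q) (snd q))"
  unfolding pd_def ee_def by (intro continuous_intros) (simp add: ne1)

lemma pg_cont: "continuous_on UNIV (\<lambda>q. pg \<delta> (fst q) (snd q))"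
  unfolding pg_def ee_def by (intro continuous_intros) (simp add: ne1)

lemma ph_odd: "ph \<delta> \<gamma> (-s) = - ph \<delta> \<gamma> s" by (simp add: ph_def ee_def)
lemma pd_even: "pd \<delta> \<gamma> (-s) = pd \<delta> \<gamma> s" by (simp add: pd_def ee_def)

lemma ph_pos: "s > 0 \<Longrightarrow> ph \<delta> \<gamma> s > 0"
  using ee_pos[of \<delta> \<gamma> s] by (simp add: ph_def)
lemma ph_neg: "s < 0 \<Longrightarrow> ph \<delta> \<gamma> s < 0"
  using ee_pos[of \<delta> \<gamma> s] by (simp add: ph_def divide_neg_pos)
lemma ph_zero_iff: "ph \<delta> \<gamma> s = 0 \<longleftrightarrow> s = 0"
  using ee_pos[of \<delta> \<gamma> s] by (auto simp: ph_def)

definition c0 :: real where "c0 = 1 / (1 + exp 1)\<^sup>2"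

lemma c0_pos: "c0 > 0" unfolding c0_def by (simp add: ne1)

lemma pd_lower:
  assumes "0 \<le> \<gamma>" "\<gamma> * s\<^sup>2 \<le> 1/2" "0 \<le> \<delta>"
  shows "pd \<delta> \<gamma> s \<ge> c0"
proof -
  let ?e = "ee \<delta> \<gamma> s"
  have e0: "?e > 0" by (rule ee_pos)
  have "\<gamma> * \<delta> \<ge> 0" using assms by simp
  hence "\<gamma> * s\<^sup>2 - \<gamma> * \<delta> \<le> 1" using assms by linarith
  hence e1: "?e \<le> exp 1" unfolding ee_def by simp
  have num: "1 + ?e - 2 * \<gamma> * s\<^sup>2 * ?e \<ge> 1"
  proof -
    have "2 * \<gamma> * s\<^sup>2 * ?e \<le> 1 * ?e" using assms e0
      by (intro mult_right_mono) auto
    thus ?thesis by simp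
  qed
  have den: "(1 + ?e)\<^sup>2 \<le> (1 + exp 1)\<^sup>2" using e0 e1 by (intro power_mono) auto
  have dpos: "(1 + ?e)\<^sup>2 > 0" using e0 by simp
  have pp: "0 < (1 + exp 1)\<^sup>2 * (1 + ?e)\<^sup>2" using dpos by (simp add: ne1)
  have "c0 \<le> 1 / (1 + ?e)\<^sup>2" unfolding c0_def using den dpos pp
    by (intro divide_left_mono) auto
  also have "\<dots> \<le> pd \<delta> \<gamma> s" unfolding pd_def using num dpos
    by (intro divide_right_mono) auto
  finally show ?thesis .
qed



lemma sum_UNIV_plus:
  "(\<Sum>v\<in>(UNIV::('a::finite + 'b::finite) set). f v) = (\<Sum>j\<in>UNIV. f (Inl j)) + (\<Sum>k\<in>UNIV. f (Inr k))"
  by (subst UNIV_Plus_UNIV [symmetric], subst sum.Plus) (auto simp: o_def)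

locale sb =
  fixes E :: "'n::finite + 'm::finite \<Rightarrow> 'n + 'm \<Rightarrow> bool"
    and z :: "'m \<Rightarrow> real" and \<delta> :: real
  assumes sg: "simple_graph E" and conn: "persuadable_connected E" and dpos: "0 \<le> \<delta>"
    and zed: "\<exists>i1 k. E (Inl i1) (Inr k)"
begin

lemma Esym: "E a b \<Longrightarrow> E b a" using sg unfolding simple_graph_def by blast

lemma propag:
  assumes "P i0" "\<And>i j. P i \<Longrightarrow> E (Inl i) (Inl j) \<Longrightarrow> P j"
  shows "P j"
proof -
  have "(\<lambda>a b. E (Inl a) (Inl b))\<^sup>*\<^sup>* i0 j" using conn unfolding persuadable_connected_def by blast
  thus ?thesis by induction (use assms in auto)
qed

lemma has_nbr: "\<exists>v. E (Inl i) v"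
proof -
  obtain i1 k where e: "E (Inl i1) (Inr k)" using zed by blast
  have "(\<lambda>a b. E (Inl a) (Inl b))\<^sup>*\<^sup>* i i1" using conn unfolding persuadable_connected_def by blast
  thus ?thesis
  proof (cases rule: converse_rtranclpE)
    case base then show ?thesis using e by blast
  next
    case (step c) then show ?thesis by blast
  qed
qed

definition ext :: "real^'n \<Rightarrow> 'n + 'm \<Rightarrow> real" where
  "ext d v = (case v of Inl j \<Rightarrow> d $ j | Inr k \<Rightarrow> 0)"

definition NN :: "real \<Rightarrow> real^'n \<Rightarrow> 'n \<Rightarrow> real" where
  "NN \<gamma> x i = (\<Sum>v\<in>UNIV. if E (Inl i) v then ph \<delta> \<gamma> (opinion x z v - x $ i) else 0)"

definition WW :: "real \<Rightarrow> real^'n \<Rightarrow> 'n \<Rightarrow> real" where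
  "WW \<gamma> x i = (\<Sum>v\<in>UNIV. if E (Inl i) v then 1 / (1 + ee \<delta> \<gamma> (opinion x z v - x $ i)) else 0)"

definition Lap :: "('n \<Rightarrow> 'n + 'm \<Rightarrow> real) \<Rightarrow> real^'n \<Rightarrow> 'n \<Rightarrow> real" where
  "Lap c d i = (\<Sum>v\<in>UNIV. if E (Inl i) v then c i v * (ext d v - d $ i) else 0)"

definition adm :: "real \<Rightarrow> ('n \<Rightarrow> 'n + 'm \<Rightarrow> real) \<Rightarrow> bool" where
  "adm \<kappa> c \<longleftrightarrow> (\<forall>i j. E (Inl i) (Inl j) \<longrightarrow> c i (Inl j) = c j (Inl i)) \<and>
                 (\<forall>i v. E (Inl i) v \<longrightarrow> c i v \<ge> \<kappa>)"

lemma ee1_pos: "1 + ee \<delta> \<gamma> s > 0" using ee_pos[of \<delta> \<gamma> s] by linarith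

lemma WW_pos: "WW \<gamma> x i > 0"
proof -
  obtain v0 where v0: "E (Inl i) v0" using has_nbr by blast
  have "0 < (if E (Inl i) v0 then 1 / (1 + ee \<delta> \<gamma> (opinion x z v0 - x $ i)) else 0)"
    using v0 ee_pos by (simp add: add_pos_pos)
  also have "\<dots> \<le> WW \<gamma> x i" unfolding WW_def
    by (rule member_le_sum) (auto simp: ee1_pos less_imp_le)
  finally show ?thesis .
qed

lemma sbcm_eq: "sbcm_f E \<gamma> \<delta> z x i = NN \<gamma> x i / WW \<gamma> x i"
proof -
  have 1: "wgt E \<gamma> \<delta> x z (Inl i) v * (opinion x z v - opinion x z (Inl i)) =
     (if E (Inl i) v then ph \<delta> \<gamma> (opinion x z v - x $ i) else 0)" for v
  proof -
    have "(x $ i - opinion x z v)\<^sup>2 = (opinion x z v - x $ i)\<^sup>2" by (simp add: power2_commute)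
    thus ?thesis by (simp add: wgt_def influence_def ph_def ee_def opinion_def)
  qed
  have 2: "wgt E \<gamma> \<delta> x z (Inl i) v =
     (if E (Inl i) v then 1 / (1 + ee \<delta> \<gamma> (opinion x z v - x $ i)) else 0)" for v
  proof -
    have "(x $ i - opinion x z v)\<^sup>2 = (opinion x z v - x $ i)\<^sup>2" by (simp add: power2_commute)
    thus ?thesis by (simp add: wgt_def influence_def ee_def opinion_def)
  qed
  show ?thesis unfolding sbcm_f_def NN_def WW_def
    by (subst sum.cong[OF refl 1], subst sum.cong[OF refl 2], rule refl)
qed

lemma steady_iff: "steady_state E \<gamma> \<delta> z x \<longleftrightarrow> (\<forall>i. NN \<gamma> x i = 0)"
  unfolding steady_state_def sbcm_eq using WW_pos
  by (metis divide_eq_0_iff less_irrefl)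

definition QQ :: "real^'n \<Rightarrow> real" where
  "QQ d = (\<Sum>i\<in>UNIV. \<Sum>j\<in>UNIV. if E (Inl i) (Inl j) then (d$i - d$j)\<^sup>2 else 0) / 2
        + (\<Sum>i\<in>UNIV. \<Sum>k\<in>UNIV. if E (Inl i) (Inr k) then (d$i)\<^sup>2 else 0)"

lemma QQ_nonneg: "QQ d \<ge> 0"
  unfolding QQ_def by (intro add_nonneg_nonneg divide_nonneg_pos sum_nonneg) auto

lemma QQ_zero: assumes "QQ d = 0" shows "d = 0"
proof -
  let ?A = "\<Sum>i\<in>UNIV. \<Sum>j\<in>UNIV. if E (Inl i) (Inl j) then (d$i - d$j)\<^sup>2 else 0"
  let ?B = "\<Sum>i\<in>UNIV. \<Sum>k\<in>UNIV. if E (Inl i) (Inr k) then (d$i)\<^sup>2 else 0"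
  have A0: "?A \<ge> 0" "?B \<ge> 0" by (intro sum_nonneg; simp)+
  hence "?A = 0" "?B = 0" using assms unfolding QQ_def by linarith+
  have ta: "(if E (Inl i) (Inl j) then (d$i - d$j)\<^sup>2 else 0) = 0" for i j
  proof -
    have "(\<Sum>j\<in>UNIV. if E (Inl i) (Inl j) then (d$i - d$j)\<^sup>2 else 0) = 0"
      using sum_nonneg_eq_0_iff[of UNIV "\<lambda>i. \<Sum>j\<in>UNIV. if E (Inl i) (Inl j) then (d$i - d$j)\<^sup>2 else 0"] \<open>?A = 0\<close>
      by (simp add: sum_nonneg)
    thus ?thesis using sum_nonneg_eq_0_iff[of UNIV "\<lambda>j. if E (Inl i) (Inl j) then (d$i - d$j)\<^sup>2 else 0"]
      by simp
  qed
  have tb: "(if E (Inl i) (Inr k) then (d$i)\<^sup>2 else 0) = 0" for i k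
  proof -
    have "(\<Sum>k\<in>UNIV. if E (Inl i) (Inr k) then (d$i)\<^sup>2 else 0) = 0"
      using sum_nonneg_eq_0_iff[of UNIV "\<lambda>i. \<Sum>k\<in>UNIV. if E (Inl i) (Inr k) then (d$i)\<^sup>2 else 0"] \<open>?B = 0\<close>
      by (simp add: sum_nonneg)
    thus ?thesis using sum_nonneg_eq_0_iff[of UNIV "\<lambda>k. if E (Inl i) (Inr k) then (d$i)\<^sup>2 else 0"]
      by simp
  qed
  have a: "\<And>i j. E (Inl i) (Inl j) \<Longrightarrow> d$i = d$j" using ta by (metis power_eq_0_iff right_minus_eq zero_neq_numeral)
  have b: "\<And>i k. E (Inl i) (Inr k) \<Longrightarrow> d$i = 0" using tb by (metis power_eq_0_iff zero_neq_numeral)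
  obtain i1 k where e: "E (Inl i1) (Inr k)" using zed by blast
  have "d$j = 0" for j
    by (rule propag[of "\<lambda>i. d$i = 0" i1]) (use b[OF e] a in auto)
  thus ?thesis by (simp add: vec_eq_iff)
qed

lemma QQ_scale: "QQ (r *\<^sub>R d) = r\<^sup>2 * QQ d"
proof -
  have h: "(r * a - r * b)\<^sup>2 = r\<^sup>2 * (a - b)\<^sup>2" for a b :: real by (simp add: power2_eq_square algebra_simps)
  have h2: "(r * a)\<^sup>2 = r\<^sup>2 * a\<^sup>2" for a :: real by (simp add: power2_eq_square algebra_simps)
  have i: "r\<^sup>2 * (if P then a else 0) = (if P then r\<^sup>2 * a else 0)" for P and a :: real by simp
  show ?thesis unfolding QQ_def
    by (simp only: vector_scaleR_component h h2 ring_distribs sum_distrib_left i times_divide_eq_right real_scaleR_def)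
qed

lemma QQ_cont: "continuous_on S QQ"
  unfolding QQ_def
  apply (intro continuous_intros)
  subgoal for i j by (cases "E (Inl i) (Inl j)") (auto intro!: continuous_intros)
   apply simp
  subgoal for i k by (cases "E (Inl i) (Inr k)") (auto intro!: continuous_intros)
  done

lemma lam_ex: "\<exists>l>0. \<forall>d. QQ d \<ge> l * (norm d)\<^sup>2"
proof -
  obtain i0 :: 'n where True by blast
  have ne: "sphere (0::real^'n) 1 \<noteq> {}"
    using norm_axis_1[of i0] by (metis mem_sphere_0 empty_iff)
  obtain x0 where x0: "x0 \<in> sphere 0 1" "\<forall>y\<in>sphere 0 1. QQ x0 \<le> QQ y"
    using continuous_attains_inf[OF compact_sphere ne QQ_cont] by blast
  have "x0 \<noteq> 0" using x0 by auto
  hence pos: "QQ x0 > 0" using QQ_zero QQ_nonneg[of x0] by force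
  have "QQ d \<ge> QQ x0 * (norm d)\<^sup>2" for d
  proof (cases "d = 0")
    case True thus ?thesis using QQ_nonneg[of d] by simp
  next
    case False
    let ?u = "(1 / norm d) *\<^sub>R d"
    have "?u \<in> sphere 0 1" using False by simp
    hence "QQ x0 \<le> QQ ?u" using x0 by blast
    also have "QQ ?u = QQ d / (norm d)\<^sup>2" by (simp add: QQ_scale power_one_over)
    finally show ?thesis using False by (simp add: field_simps)
  qed
  thus ?thesis using pos by blast
qed

definition lam0 :: real where "lam0 = (SOME l. l > 0 \<and> (\<forall>d. QQ d \<ge> l * (norm d)\<^sup>2))"

lemma lam0: "lam0 > 0" "QQ d \<ge> lam0 * (norm d)\<^sup>2"
  using someI_ex[OF lam_ex] unfolding lam0_def by blast+

end


lemma symsum: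
  fixes a :: "'n::finite \<Rightarrow> 'n \<Rightarrow> real"
  assumes "\<And>i j. a i j = a j i"
  shows "(\<Sum>i\<in>UNIV. \<Sum>j\<in>UNIV. a i j * (d i * (d j - d i))) = - (1/2) * (\<Sum>i\<in>UNIV. \<Sum>j\<in>UNIV. a i j * (d i - d j)\<^sup>2)"
proof -
  let ?S = "\<Sum>i\<in>UNIV. \<Sum>j\<in>UNIV. a i j * (d i * (d j - d i))"
  have "?S = (\<Sum>j\<in>UNIV. \<Sum>i\<in>UNIV. a i j * (d i * (d j - d i)))" by (rule sum.swap)
  also have "\<dots> = (\<Sum>i\<in>UNIV. \<Sum>j\<in>UNIV. a i j * (d j * (d i - d j)))" using assms by simp
  finally have "2 * ?S = ?S + (\<Sum>i\<in>UNIV. \<Sum>j\<in>UNIV. a i j * (d j * (d i - d j)))" by simp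
  also have "\<dots> = (\<Sum>i\<in>UNIV. \<Sum>j\<in>UNIV. a i j * (d i * (d j - d i)) + a i j * (d j * (d i - d j)))"
    by (simp add: sum.distrib)
  also have "\<dots> = (\<Sum>i\<in>UNIV. \<Sum>j\<in>UNIV. - (a i j * (d i - d j)\<^sup>2))"
    by (intro sum.cong refl) (simp add: power2_eq_square algebra_simps)
  finally show ?thesis by (simp add: sum_negf)
qed

lemma symsum2:
  fixes a :: "'n::finite \<Rightarrow> 'n \<Rightarrow> real"
  assumes "\<And>i j. a i j = a j i"
  shows "(\<Sum>i\<in>UNIV. \<Sum>j\<in>UNIV. a i j * (u i * d j)) = (\<Sum>i\<in>UNIV. \<Sum>j\<in>UNIV. a i j * (d i * u j))"
proof -
  have "(\<Sum>i\<in>UNIV. \<Sum>j\<in>UNIV. a i j * (u i * d j)) = (\<Sum>j\<in>UNIV. \<Sum>i\<in>UNIV. a i j * (u i * d j))"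
    by (rule sum.swap)
  also have "\<dots> = (\<Sum>i\<in>UNIV. \<Sum>j\<in>UNIV. a i j * (d i * u j))" using assms by (simp add: mult.commute)
  finally show ?thesis .
qed

context sb begin

definition aa :: "('n \<Rightarrow> 'n + 'm \<Rightarrow> real) \<Rightarrow> 'n \<Rightarrow> 'n \<Rightarrow> real" where
  "aa c i j = (if E (Inl i) (Inl j) then c i (Inl j) else 0)"
definition bb :: "('n \<Rightarrow> 'n + 'm \<Rightarrow> real) \<Rightarrow> 'n \<Rightarrow> real" where
  "bb c i = (\<Sum>k\<in>UNIV. if E (Inl i) (Inr k) then c i (Inr k) else 0)"

lemma Lap_split: "Lap c d i = (\<Sum>j\<in>UNIV. aa c i j * (d$j - d$i)) - d$i * bb c i"
proof -
  have "Lap c d i = (\<Sum>j\<in>UNIV. if E (Inl i) (Inl j) then c i (Inl j) * (d$j - d$i) else 0)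
     + (\<Sum>k\<in>UNIV. if E (Inl i) (Inr k) then c i (Inr k) * (0 - d$i) else 0)"
    unfolding Lap_def sum_UNIV_plus ext_def by (simp only: sum.case)
  also have "(\<Sum>j\<in>UNIV. if E (Inl i) (Inl j) then c i (Inl j) * (d$j - d$i) else 0)
      = (\<Sum>j\<in>UNIV. aa c i j * (d$j - d$i))"
    by (intro sum.cong) (auto simp: aa_def)
  also have "(\<Sum>k\<in>UNIV. if E (Inl i) (Inr k) then c i (Inr k) * (0 - d$i) else 0)
      = (\<Sum>k\<in>UNIV. - (d$i * (if E (Inl i) (Inr k) then c i (Inr k) else 0)))"
    by (intro sum.cong) auto
  also have "\<dots> = - (d$i * bb c i)" by (simp add: sum_negf bb_def sum_distrib_left)
  finally show ?thesis by simp
qed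

lemma aa_sym: "adm \<kappa> c \<Longrightarrow> aa c i j = aa c j i"
  unfolding adm_def aa_def using Esym by auto

lemma inner_Lap: "(\<Sum>i\<in>UNIV. u$i * Lap c d i) =
   (\<Sum>i\<in>UNIV. \<Sum>j\<in>UNIV. aa c i j * (u$i * d$j)) - (\<Sum>i\<in>UNIV. u$i * d$i * ((\<Sum>j\<in>UNIV. aa c i j) + bb c i))"
proof -
  have pt: "u$i * Lap c d i = (\<Sum>j\<in>UNIV. aa c i j * (u$i * d$j)) - u$i * d$i * ((\<Sum>j\<in>UNIV. aa c i j) + bb c i)" for i
  proof -
    have "u$i * (\<Sum>j\<in>UNIV. aa c i j * (d$j - d$i)) = (\<Sum>j\<in>UNIV. aa c i j * (u$i * d$j)) - u$i * d$i * (\<Sum>j\<in>UNIV. aa c i j)"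
      by (simp add: sum_distrib_left sum_subtractf algebra_simps)
    thus ?thesis unfolding Lap_split by (simp add: algebra_simps)
  qed
  show ?thesis unfolding pt by (rule sum_subtractf)
qed

lemma Lap_selfadj: assumes "adm \<kappa> c"
  shows "(\<Sum>i\<in>UNIV. u$i * Lap c d i) = (\<Sum>i\<in>UNIV. d$i * Lap c u i)"
  unfolding inner_Lap using symsum2[of "aa c" "\<lambda>i. u$i" "\<lambda>j. d$j"] aa_sym[OF assms]
  by (simp add: mult.commute mult.left_commute)

lemma Lap_quad: assumes "adm \<kappa> c" "\<kappa> \<ge> 0"
  shows "(\<Sum>i\<in>UNIV. d$i * Lap c d i) \<le> - \<kappa> * QQ d"
proof -
  have eq: "(\<Sum>i\<in>UNIV. d$i * Lap c d i) = - (1/2) * (\<Sum>i\<in>UNIV. \<Sum>j\<in>UNIV. aa c i j * (d$i - d$j)\<^sup>2)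
          - (\<Sum>i\<in>UNIV. (d$i)\<^sup>2 * bb c i)"
  proof -
    have pt: "d$i * Lap c d i = (\<Sum>j\<in>UNIV. aa c i j * (d$i * (d$j - d$i))) - (d$i)\<^sup>2 * bb c i" for i
    proof -
      have "d$i * (\<Sum>j\<in>UNIV. aa c i j * (d$j - d$i)) = (\<Sum>j\<in>UNIV. aa c i j * (d$i * (d$j - d$i)))"
        by (simp add: sum_distrib_left algebra_simps)
      thus ?thesis unfolding Lap_split by (simp add: algebra_simps power2_eq_square)
    qed
    have "(\<Sum>i\<in>UNIV. d$i * Lap c d i) = (\<Sum>i\<in>UNIV. \<Sum>j\<in>UNIV. aa c i j * (d$i * (d$j - d$i)))
          - (\<Sum>i\<in>UNIV. (d$i)\<^sup>2 * bb c i)"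
      unfolding pt by (rule sum_subtractf)
    thus ?thesis using symsum[of "aa c" "\<lambda>i. d$i"] aa_sym[OF assms(1)] by simp
  qed
  have A: "\<kappa> * (\<Sum>i\<in>UNIV. \<Sum>j\<in>UNIV. if E (Inl i) (Inl j) then (d$i - d$j)\<^sup>2 else 0)
        \<le> (\<Sum>i\<in>UNIV. \<Sum>j\<in>UNIV. aa c i j * (d$i - d$j)\<^sup>2)"
    unfolding sum_distrib_left
    using assms unfolding adm_def aa_def
    by (intro sum_mono) (auto intro: mult_right_mono)
  have B: "\<kappa> * (\<Sum>i\<in>UNIV. \<Sum>k\<in>UNIV. if E (Inl i) (Inr k) then (d$i)\<^sup>2 else 0)
        \<le> (\<Sum>i\<in>UNIV. (d$i)\<^sup>2 * bb c i)"
    unfolding sum_distrib_left bb_def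
    using assms unfolding adm_def
    by (intro sum_mono) (auto intro: mult_right_mono simp: mult.commute)
  show ?thesis unfolding eq QQ_def using A B by (simp add: algebra_simps)
qed

definition LV :: "('n \<Rightarrow> 'n + 'm \<Rightarrow> real) \<Rightarrow> real^'n \<Rightarrow> real^'n" where
  "LV c d = (\<chi> i. Lap c d i)"

lemma coercive: assumes "adm \<kappa> c" "\<kappa> > 0"
  shows "\<kappa> * lam0 * norm d \<le> norm (LV c d)"
proof (cases "d = 0")
  case True thus ?thesis by simp
next
  case False
  have "\<kappa> * lam0 * (norm d)\<^sup>2 \<le> \<kappa> * QQ d" using lam0(2)[of d] assms by simp
  also have "\<dots> \<le> - (\<Sum>i\<in>UNIV. d$i * Lap c d i)" using Lap_quad[OF assms(1) less_imp_le[OF assms(2)], of d] by linarith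
  also have "(\<Sum>i\<in>UNIV. d$i * Lap c d i) = inner d (LV c d)" by (simp add: LV_def inner_vec_def)
  also have "- inner d (LV c d) \<le> norm d * norm (LV c d)"
    using norm_cauchy_schwarz[of "-d" "LV c d"] by simp
  finally have "(\<kappa> * lam0 * norm d) * norm d \<le> norm (LV c d) * norm d" by (simp add: power2_eq_square algebra_simps)
  thus ?thesis using False by simp
qed

lemma Lap_linear: "Lap c (d + e) i = Lap c d i + Lap c e i" "Lap c (r *\<^sub>R d) i = r * Lap c d i"
  unfolding Lap_def ext_def sum.distrib[symmetric] sum_distrib_left
  by (intro sum.cong refl; auto split: sum.split simp: algebra_simps)+

lemma LV_linear: "linear (LV c)"
  by (rule linearI) (simp_all add: LV_def Lap_linear vec_eq_iff)

lemma LV_diff: "LV c (d - e) = LV c d - LV c e"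
  using linear_diff[OF LV_linear] .

end


definition sec :: "real \<Rightarrow> real \<Rightarrow> real \<Rightarrow> real \<Rightarrow> real" where
  "sec \<delta> \<gamma> a b = (if a = b then pd \<delta> \<gamma> a else (ph \<delta> \<gamma> a - ph \<delta> \<gamma> b) / (a - b))"

lemma sec_eq: "ph \<delta> \<gamma> a - ph \<delta> \<gamma> b = sec \<delta> \<gamma> a b * (a - b)"
  by (simp add: sec_def)

lemma sec_sym: "sec \<delta> \<gamma> (-a) (-b) = sec \<delta> \<gamma> a b"
  by (simp add: sec_def ph_odd pd_even) (simp add: field_simps)

lemma sec_mvt: "\<exists>\<xi>. min a b \<le> \<xi> \<and> \<xi> \<le> max a b \<and> sec \<delta> \<gamma> a b = pd \<delta> \<gamma> \<xi>"
proof (cases a b rule: linorder_cases)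
  case less
  obtain \<xi> where "a < \<xi>" "\<xi> < b" "ph \<delta> \<gamma> b - ph \<delta> \<gamma> a = (b - a) * pd \<delta> \<gamma> \<xi>"
    using MVT2[OF less, of "ph \<delta> \<gamma>" "pd \<delta> \<gamma>"] ph_deriv by blast
  moreover have "sec \<delta> \<gamma> a b = (ph \<delta> \<gamma> b - ph \<delta> \<gamma> a) / (b - a)" using less
    by (simp add: sec_def) (simp add: field_simps)
  ultimately show ?thesis using less by (intro exI[of _ \<xi>]) auto
next
  case equal thus ?thesis by (intro exI[of _ a]) (simp add: sec_def)
next
  case greater
  obtain \<xi> where "b < \<xi>" "\<xi> < a" "ph \<delta> \<gamma> a - ph \<delta> \<gamma> b = (a - b) * pd \<delta> \<gamma> \<xi>"
    using MVT2[OF greater, of "ph \<delta> \<gamma>" "pd \<delta> \<gamma>"] ph_deriv by blast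
  moreover have "sec \<delta> \<gamma> a b = (ph \<delta> \<gamma> a - ph \<delta> \<gamma> b) / (a - b)" using greater
    by (simp add: sec_def)
  ultimately show ?thesis using greater by (intro exI[of _ \<xi>]) auto
qed

lemma sec_lower:
  assumes "0 \<le> \<gamma>" "\<gamma> * R\<^sup>2 \<le> 1/2" "\<bar>a\<bar> \<le> R" "\<bar>b\<bar> \<le> R" "0 \<le> \<delta>"
  shows "sec \<delta> \<gamma> a b \<ge> c0"
proof -
  obtain \<xi> where \<xi>: "min a b \<le> \<xi>" "\<xi> \<le> max a b" "sec \<delta> \<gamma> a b = pd \<delta> \<gamma> \<xi>" using sec_mvt by blast
  have "\<bar>\<xi>\<bar> \<le> R" using \<xi> assms by linarith
  hence "\<bar>\<xi>\<bar>\<^sup>2 \<le> R\<^sup>2" by (intro power_mono) auto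
  hence "\<xi>\<^sup>2 \<le> R\<^sup>2" by simp
  hence "\<gamma> * \<xi>\<^sup>2 \<le> \<gamma> * R\<^sup>2" using assms by (simp add: mult_left_mono)
  hence "pd \<delta> \<gamma> \<xi> \<ge> c0" using assms by (intro pd_lower) auto
  thus ?thesis using \<xi> by simp
qed

context sb begin

definition Zmax :: real where "Zmax = Max (range z)"
definition Zmin :: real where "Zmin = Min (range z)"
definition RR :: real where "RR = Zmax - Zmin"
definition eps :: real where "eps = 1 / (2 * RR\<^sup>2 + 2)"

lemma z_bounds: "Zmin \<le> z k" "z k \<le> Zmax"
  unfolding Zmin_def Zmax_def by auto

lemma eps_pos: "eps > 0" unfolding eps_def by (simp add: add_nonneg_pos)

lemma eps_R: assumes "0 \<le> \<gamma>" "\<gamma> < eps" shows "\<gamma> * RR\<^sup>2 \<le> 1/2"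
proof -
  have "\<gamma> * RR\<^sup>2 \<le> eps * RR\<^sup>2" using assms by (simp add: mult_right_mono)
  also have "\<dots> = RR\<^sup>2 / (2 * RR\<^sup>2 + 2)" by (simp add: eps_def)
  also have "\<dots> \<le> 1/2"
  proof -
    have p: "0 < 2 * RR\<^sup>2 + 2" by (simp add: add_nonneg_pos)
    show ?thesis unfolding pos_divide_le_eq[OF p] by simp
  qed
  finally show ?thesis .
qed

definition inbox :: "real^'n \<Rightarrow> bool" where
  "inbox x \<longleftrightarrow> (\<forall>i. Zmin \<le> x$i \<and> x$i \<le> Zmax)"

lemma op_bounds: "inbox x \<Longrightarrow> Zmin \<le> opinion x z v \<and> opinion x z v \<le> Zmax"
  unfolding inbox_def opinion_def using z_bounds by (auto split: sum.split)

lemma diff_bound: "inbox x \<Longrightarrow> \<bar>opinion x z v - x$i\<bar> \<le> RR"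
  using op_bounds[of x v] op_bounds[of x "Inl i"] unfolding RR_def by (auto simp: opinion_def)

lemma max_principle_gen:
  assumes U: "\<And>k. z k \<le> U" and st: "\<forall>i. NN \<gamma> x i = 0"
  shows "x$i \<le> U"
proof (rule ccontr)
  assume "\<not> x$i \<le> U"
  define M where "M = Max (range (\<lambda>i. x$i))"
  have xM: "x$j \<le> M" for j unfolding M_def by auto
  have "M \<in> range (\<lambda>i. x$i)" unfolding M_def by (intro Max_in) auto
  then obtain i0 where i0: "x$i0 = M" by auto
  have MU: "M > U" using xM[of i] \<open>\<not> x$i \<le> U\<close> by linarith
  have opM: "opinion x z v \<le> M" for v
  proof (cases v)
    case (Inl j) thus ?thesis using xM by (simp add: opinion_def)
  next
    case (Inr k) thus ?thesis using U[of k] MU by (simp add: opinion_def)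
  qed
  have key: "opinion x z v = M" if "x$j = M" "E (Inl j) v" for j v
  proof -
    let ?t = "\<lambda>v. if E (Inl j) v then ph \<delta> \<gamma> (opinion x z v - x$j) else 0"
    have nonpos: "?t v \<le> 0" for v using opM[of v] that(1) ph_neg[of "opinion x z v - x$j" \<delta> \<gamma>]
      by (cases "opinion x z v - x$j = 0") (auto simp: ph_zero_iff ph_def)
    have "sum ?t UNIV = 0" using st unfolding NN_def by blast
    hence "(\<Sum>v\<in>UNIV. - ?t v) = 0" by (simp add: sum_negf)
    hence "- ?t v = 0" using sum_nonneg_eq_0_iff[of UNIV "\<lambda>v. - ?t v"] nonpos by auto
    hence "ph \<delta> \<gamma> (opinion x z v - x$j) = 0" using that by simp
    thus ?thesis using that by (simp add: ph_zero_iff)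
  qed
  have all: "x$j = M" for j
  proof (rule propag[of "\<lambda>j. x$j = M" i0])
    show "x$i0 = M" by (rule i0)
    fix i j assume "x$i = M" "E (Inl i) (Inl j)"
    from key[OF this] show "x$j = M" by (simp add: opinion_def)
  qed
  obtain i1 k where e: "E (Inl i1) (Inr k)" using zed by blast
  have "z k = M" using key[OF all e] by (simp add: opinion_def)
  thus False using U[of k] MU by simp
qed

lemma box_principle: assumes "steady_state E \<gamma> \<delta> z x" shows "inbox x"
proof -
  have st: "\<forall>i. NN \<gamma> x i = 0" using assms steady_iff by blast
  interpret ng: sb E "\<lambda>k. - z k" \<delta> by (rule sb_axioms)
  have opn: "opinion (-x) (\<lambda>k. - z k) v = - opinion x z v" for v by (simp add: opinion_def split: sum.split)
  have "ng.NN \<gamma> (-x) i = - NN \<gamma> x i" for i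
  proof -
    have po: "ph \<delta> \<gamma> (x$i - opinion x z v) = - ph \<delta> \<gamma> (opinion x z v - x$i)" for v
      using ph_odd[of \<delta> \<gamma> "opinion x z v - x$i"] by simp
    show ?thesis unfolding ng.NN_def NN_def opn by (simp add: po sum_negf[symmetric] if_distrib cong: if_cong)
  qed
  hence st2: "\<forall>i. ng.NN \<gamma> (-x) i = 0" using st by simp
  have "(-x)$i \<le> - Zmin" for i
  proof (rule ng.max_principle_gen[OF _ st2])
    show "- z k \<le> - Zmin" for k using z_bounds(1)[of k] by simp
  qed
  moreover have "x$i \<le> Zmax" for i using max_principle_gen[OF _ st] z_bounds by simp
  ultimately show ?thesis unfolding inbox_def by simp
qed

definition cs :: "real \<Rightarrow> real^'n \<Rightarrow> real^'n \<Rightarrow> 'n \<Rightarrow> 'n + 'm \<Rightarrow> real" where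
  "cs \<gamma> x y i v = sec \<delta> \<gamma> (opinion x z v - x$i) (opinion y z v - y$i)"

lemma diff_Lap: "NN \<gamma> x i - NN \<gamma> y i = Lap (cs \<gamma> x y) (x - y) i"
proof -
  have "opinion x z v - x$i - (opinion y z v - y$i) = ext (x - y) v - (x - y)$i" for v
    by (simp add: opinion_def ext_def split: sum.split)
  thus ?thesis unfolding NN_def Lap_def cs_def sum_subtractf[symmetric]
    by (intro sum.cong refl) (simp add: sec_eq)
qed

lemma adm_cs: assumes "0 \<le> \<gamma>" "\<gamma> < eps" "inbox x" "inbox y"
  shows "adm c0 (cs \<gamma> x y)"
  unfolding adm_def
proof (intro conjI allI impI)
  fix i j assume "E (Inl i) (Inl j)"
  have "cs \<gamma> x y j (Inl i) = sec \<delta> \<gamma> (- (x$j - x$i)) (- (y$j - y$i))"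
    by (simp add: cs_def opinion_def)
  also have "\<dots> = cs \<gamma> x y i (Inl j)"
    using sec_sym[of \<delta> \<gamma> "x$j - x$i" "y$j - y$i"] by (simp add: cs_def opinion_def)
  finally show "cs \<gamma> x y i (Inl j) = cs \<gamma> x y j (Inl i)" ..
next
  fix i v assume "E (Inl i) v"
  have h1: "\<bar>opinion x z v - x$i\<bar> \<le> RR" by (rule diff_bound[OF assms(3)])
  have h2: "\<bar>opinion y z v - y$i\<bar> \<le> RR" by (rule diff_bound[OF assms(4)])
  show "c0 \<le> cs \<gamma> x y i v" unfolding cs_def
    by (rule sec_lower[OF assms(1) eps_R[OF assms(1,2)] h1 h2 dpos])
qed

lemma unique_steady:
  assumes "0 \<le> \<gamma>" "\<gamma> < eps" "steady_state E \<gamma> \<delta> z x" "steady_state E \<gamma> \<delta> z y"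
  shows "x = y"
proof -
  have bx: "inbox x" "inbox y" using box_principle assms by auto
  have "LV (cs \<gamma> x y) (x - y) = 0"
    using diff_Lap[of \<gamma> x _ y] assms(3,4) unfolding steady_iff LV_def by (simp add: vec_eq_iff)
  moreover have "c0 * lam0 * norm (x - y) \<le> norm (LV (cs \<gamma> x y) (x - y))"
    by (rule coercive[OF adm_cs[OF assms(1,2) bx] c0_pos])
  ultimately have "c0 * lam0 * norm (x - y) \<le> 0" by simp
  hence "norm (x - y) \<le> 0" using c0_pos lam0(1)
    by (metis mult_pos_pos not_le zero_less_mult_iff norm_ge_zero order.not_eq_order_implies_strict)
  thus ?thesis by simp
qed

end


lemma cont_if_const[continuous_intros]:
  "continuous_on S f \<Longrightarrow> continuous_on S (\<lambda>x. if P then f x else (0::real))"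
  by (cases P) auto

context sb begin

lemma op_cont[continuous_intros]: "continuous_on S (\<lambda>x. opinion x z v)"
  by (cases v) (auto simp: opinion_def intro!: continuous_intros)

definition TT :: "real \<Rightarrow> real^'n \<Rightarrow> real^'n" where
  "TT \<gamma> x = (\<chi> i. (\<Sum>v\<in>UNIV. if E (Inl i) v then opinion x z v / (1 + ee \<delta> \<gamma> (opinion x z v - x$i)) else 0)
              / WW \<gamma> x i)"

lemma NN_alt: "NN \<gamma> x i = (\<Sum>v\<in>UNIV. if E (Inl i) v then opinion x z v / (1 + ee \<delta> \<gamma> (opinion x z v - x$i)) else 0)
    - x$i * WW \<gamma> x i"
proof -
  have "(if E (Inl i) v then ph \<delta> \<gamma> (opinion x z v - x $ i) else 0) =
     (if E (Inl i) v then opinion x z v / (1 + ee \<delta> \<gamma> (opinion x z v - x$i)) else 0)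
     - x$i * (if E (Inl i) v then 1 / (1 + ee \<delta> \<gamma> (opinion x z v - x $ i)) else 0)" for v
    by (simp add: ph_def diff_divide_distrib)
  thus ?thesis unfolding NN_def WW_def sum_distrib_left sum_subtractf[symmetric] by simp
qed

lemma fix_steady: "TT \<gamma> x = x \<Longrightarrow> steady_state E \<gamma> \<delta> z x"
  unfolding steady_iff
proof
  fix i assume "TT \<gamma> x = x"
  hence "TT \<gamma> x $ i = x $ i" by simp
  hence "(\<Sum>v\<in>UNIV. if E (Inl i) v then opinion x z v / (1 + ee \<delta> \<gamma> (opinion x z v - x$i)) else 0)
              / WW \<gamma> x i = x$i" unfolding TT_def by (simp only: vec_lambda_beta)
  hence "(\<Sum>v\<in>UNIV. if E (Inl i) v then opinion x z v / (1 + ee \<delta> \<gamma> (opinion x z v - x$i)) else 0)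
          = x$i * WW \<gamma> x i" using WW_pos[of \<gamma> x i] by (simp add: divide_eq_eq)
  thus "NN \<gamma> x i = 0" unfolding NN_alt by simp
qed

lemma TT_box: assumes "inbox x" shows "inbox (TT \<gamma> x)"
  unfolding inbox_def
proof
  fix i
  let ?w = "\<lambda>v. if E (Inl i) v then 1 / (1 + ee \<delta> \<gamma> (opinion x z v - x $ i)) else 0"
  let ?S = "\<Sum>v\<in>UNIV. if E (Inl i) v then opinion x z v / (1 + ee \<delta> \<gamma> (opinion x z v - x$i)) else 0"
  have w0: "?w v \<ge> 0" for v using ee1_pos by (simp add: less_imp_le)
  have eq: "(if E (Inl i) v then opinion x z v / (1 + ee \<delta> \<gamma> (opinion x z v - x$i)) else 0) = opinion x z v * ?w v" for v
    by simp
  have "?S \<le> (\<Sum>v\<in>UNIV. Zmax * ?w v)" unfolding eq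
    by (intro sum_mono mult_right_mono) (use op_bounds[OF assms] w0 in auto)
  hence up: "?S \<le> Zmax * WW \<gamma> x i" by (simp add: WW_def sum_distrib_left)
  have "(\<Sum>v\<in>UNIV. Zmin * ?w v) \<le> ?S" unfolding eq
    by (intro sum_mono mult_right_mono) (use op_bounds[OF assms] w0 in auto)
  hence lo: "Zmin * WW \<gamma> x i \<le> ?S" by (simp add: WW_def sum_distrib_left)
  have W: "WW \<gamma> x i > 0" by (rule WW_pos)
  show "Zmin \<le> TT \<gamma> x $ i \<and> TT \<gamma> x $ i \<le> Zmax"
    unfolding TT_def using up lo W by (simp add: pos_le_divide_eq pos_divide_le_eq)
qed

lemma WW_ne0: "WW \<gamma> x i = 0 \<Longrightarrow> False" using WW_pos[of \<gamma> x i] by simp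

lemma TT_cont: "continuous_on S (TT \<gamma>)"
proof -
  have "continuous_on S (\<lambda>x. WW \<gamma> x i)" for i
    unfolding WW_def ee_def by (intro continuous_intros) (simp add: ne1)
  thus ?thesis unfolding TT_def ee_def
    by (intro continuous_intros) (auto simp: ne1 dest: WW_ne0)
qed

lemma inbox_cbox: "inbox x \<longleftrightarrow> x \<in> cbox (vec Zmin) (vec Zmax)"
  unfolding inbox_def mem_box_cart by simp

lemma exists_steady: "\<exists>x. steady_state E \<gamma> \<delta> z x"
proof -
  let ?S = "cbox (vec Zmin) (vec Zmax) :: (real^'n) set"
  obtain k :: 'm where True by blast
  have "Zmin \<le> Zmax" using z_bounds[of k] by linarith
  hence "vec Zmin \<in> ?S" unfolding mem_box_cart by simp
  hence ne: "?S \<noteq> {}" by blast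
  have "TT \<gamma> \<in> ?S \<rightarrow> ?S" using TT_box inbox_cbox by blast
  then obtain x where "x \<in> ?S" "TT \<gamma> x = x"
    using brouwer[OF compact_cbox convex_box(1) ne TT_cont] by blast
  thus ?thesis using fix_steady by blast
qed

end


lemma ev_in: "\<forall>\<^sub>F y in at x within S. y \<in> S"
  unfolding eventually_at_filter by simp
lemma ev_ne: "\<forall>\<^sub>F y in at x within S. y \<noteq> x"
  unfolding eventually_at_filter by simp

lemma cont_tendsto: fixes f :: "real \<Rightarrow> 'b::topological_space" assumes "continuous_on UNIV f" shows "(f \<longlongrightarrow> f x) (at x within S)"
proof -
  have "isCont f x" using assms by (simp add: continuous_on_eq_continuous_at)
  hence "(f \<longlongrightarrow> f x) (at x)" by (simp add: isCont_def)
  thus ?thesis by (rule tendsto_within_subset) simp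
qed

lemma DERIV_if_const:
  "(P \<Longrightarrow> (f has_real_derivative D) F) \<Longrightarrow> ((\<lambda>x. if P then f x else 0) has_real_derivative (if P then D else 0)) F"
  by (cases P) auto

lemma tendsto_if_const:
  "(P \<Longrightarrow> (f \<longlongrightarrow> l) F) \<Longrightarrow> ((\<lambda>x. if P then f x else (0::real)) \<longlongrightarrow> (if P then l else 0)) F"
  by (cases P) auto

lemma pd_tendsto: "(g \<longlongrightarrow> \<gamma>) F \<Longrightarrow> (s \<longlongrightarrow> s0) F \<Longrightarrow> ((\<lambda>t. pd \<delta> (g t) (s t)) \<longlongrightarrow> pd \<delta> \<gamma> s0) F"
  using continuous_on_tendsto_compose[OF pd_cont tendsto_Pair, of g \<gamma> F s s0] by simp

lemma pg_tendsto: "(g \<longlongrightarrow> \<gamma>) F \<Longrightarrow> (s \<longlongrightarrow> s0) F \<Longrightarrow> ((\<lambda>t. pg \<delta> (g t) (s t)) \<longlongrightarrow> pg \<delta> \<gamma> s0) F"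
  using continuous_on_tendsto_compose[OF pg_cont tendsto_Pair, of g \<gamma> F s s0] by simp

lemma sec_tendsto:
  assumes g: "(g \<longlongrightarrow> \<gamma>) F" and u: "(u \<longlongrightarrow> b) F"
  shows "((\<lambda>t. sec \<delta> (g t) (u t) b) \<longlongrightarrow> pd \<delta> \<gamma> b) F"
proof -
  define \<xi> where "\<xi> t = (SOME \<xi>. min (u t) b \<le> \<xi> \<and> \<xi> \<le> max (u t) b \<and> sec \<delta> (g t) (u t) b = pd \<delta> (g t) \<xi>)" for t
  have \<xi>: "min (u t) b \<le> \<xi> t \<and> \<xi> t \<le> max (u t) b \<and> sec \<delta> (g t) (u t) b = pd \<delta> (g t) (\<xi> t)" for t
    unfolding \<xi>_def by (rule someI_ex) (rule sec_mvt)
  have u0: "((\<lambda>t. u t - b) \<longlongrightarrow> 0) F" using u by (simp only: LIM_zero_iff)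
  have lim: "((\<lambda>t. \<bar>u t - b\<bar>) \<longlongrightarrow> 0) F" by (rule tendsto_rabs_zero[OF u0])
  have bnd: "\<forall>t. norm (\<xi> t - b) \<le> \<bar>u t - b\<bar>"
  proof
    fix t show "norm (\<xi> t - b) \<le> \<bar>u t - b\<bar>" using \<xi>[of t] by (cases "u t \<le> b") (auto simp: min_def max_def)
  qed
  have "((\<lambda>t. \<xi> t - b) \<longlongrightarrow> 0) F" by (rule Lim_null_comparison[OF always_eventually[OF bnd] lim])
  hence "(\<xi> \<longlongrightarrow> b) F" by (simp add: LIM_zero_iff)
  hence "((\<lambda>t. pd \<delta> (g t) (\<xi> t)) \<longlongrightarrow> pd \<delta> \<gamma> b) F" by (rule pd_tendsto[OF g])
  thus ?thesis using \<xi> by simp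
qed

lemma vecderiv_from_quot:
  fixes f :: "real \<Rightarrow> 'a::real_normed_vector"
  assumes "((\<lambda>y. (1 / (y - x)) *\<^sub>R (f y - f x) - D) \<longlongrightarrow> 0) (at x within S)"
  shows "(f has_vector_derivative D) (at x within S)"
  unfolding has_vector_derivative_def has_derivative_within
proof (intro conjI)
  show "bounded_linear (\<lambda>t. t *\<^sub>R D)" by (rule bounded_linear_scaleR_left)
  have "\<forall>\<^sub>F y in at x within S. norm ((1 / norm (y - x)) *\<^sub>R (f y - (f x + (y - x) *\<^sub>R D)))
          \<le> norm ((1 / (y - x)) *\<^sub>R (f y - f x) - D)"
    using ev_ne
  proof (rule eventually_mono)
    fix y assume "y \<noteq> x"
    hence "(1 / (y - x)) *\<^sub>R (f y - f x) - D = (1 / (y - x)) *\<^sub>R (f y - (f x + (y - x) *\<^sub>R D))"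
      by (simp add: scaleR_diff_right scaleR_add_right)
    thus "norm ((1 / norm (y - x)) *\<^sub>R (f y - (f x + (y - x) *\<^sub>R D)))
          \<le> norm ((1 / (y - x)) *\<^sub>R (f y - f x) - D)" by simp
  qed
  moreover have "((\<lambda>y. norm ((1 / (y - x)) *\<^sub>R (f y - f x) - D)) \<longlongrightarrow> 0) (at x within S)"
    using tendsto_norm_zero[OF assms] .
  ultimately show "((\<lambda>y. (1 / norm (y - x)) *\<^sub>R (f y - (f x + (y - x) *\<^sub>R D))) \<longlongrightarrow> 0) (at x within S)"
    by (rule Lim_null_comparison)
qed

context sb begin

definition hh :: "real \<Rightarrow> real^'n" where "hh \<gamma> = (SOME x. steady_state E \<gamma> \<delta> z x)"
definition SS :: "real set" where "SS = {0..<eps}"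

lemma hh_steady: "steady_state E \<gamma> \<delta> z (hh \<gamma>)"
  unfolding hh_def by (rule someI_ex) (rule exists_steady)

lemma hh_NN: "NN \<gamma> (hh \<gamma>) i = 0" using hh_steady steady_iff by blast

lemma hh_box: "inbox (hh \<gamma>)" using hh_steady box_principle by blast

lemma hh_unique: "\<gamma> \<in> SS \<Longrightarrow> steady_state E \<gamma> \<delta> z x \<Longrightarrow> x = hh \<gamma>"
  using unique_steady[OF _ _ _ hh_steady] unfolding SS_def by auto

lemma op_tendsto: "(f \<longlongrightarrow> x) F \<Longrightarrow> ((\<lambda>t. opinion (f t) z v) \<longlongrightarrow> opinion x z v) F"
  by (cases v) (auto simp: opinion_def intro: tendsto_vec_nth)

lemma coer_tendsto:
  assumes "\<forall>\<^sub>F t in F. adm c0 (c t)" "((\<lambda>t. LV (c t) (u t)) \<longlongrightarrow> 0) F"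
  shows "(u \<longlongrightarrow> 0) F"
proof -
  have "\<forall>\<^sub>F t in F. norm (u t) \<le> norm (LV (c t) (u t)) / (c0 * lam0)"
    using assms(1)
  proof (rule eventually_mono)
    fix t assume "adm c0 (c t)"
    from coercive[OF this c0_pos] have "c0 * lam0 * norm (u t) \<le> norm (LV (c t) (u t))" .
    thus "norm (u t) \<le> norm (LV (c t) (u t)) / (c0 * lam0)"
      using c0_pos lam0(1) by (simp add: pos_le_divide_eq mult.commute)
  qed
  moreover have "((\<lambda>t. norm (LV (c t) (u t)) / (c0 * lam0)) \<longlongrightarrow> 0) F"
    using tendsto_divide_zero[OF tendsto_norm_zero[OF assms(2)]] .
  ultimately show ?thesis by (rule Lim_null_comparison)
qed

lemma NN_cont_gamma: "continuous_on UNIV (\<lambda>g. NN g x i)"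
  unfolding NN_def ph_def ee_def by (intro continuous_intros) (simp add: ne1)

definition NG :: "real \<Rightarrow> real^'n \<Rightarrow> 'n \<Rightarrow> real" where
  "NG \<gamma> x i = (\<Sum>v\<in>UNIV. if E (Inl i) v then pg \<delta> \<gamma> (opinion x z v - x $ i) else 0)"

lemma NN_deriv_gamma: "((\<lambda>g. NN g x i) has_real_derivative NG \<gamma> x i) (at \<gamma> within S)"
  unfolding NN_def NG_def
  by (intro DERIV_sum DERIV_if_const ph_deriv_gamma)

definition cp :: "real \<Rightarrow> real^'n \<Rightarrow> 'n \<Rightarrow> 'n + 'm \<Rightarrow> real" where
  "cp \<gamma> x i v = pd \<delta> \<gamma> (opinion x z v - x$i)"

lemma adm_cp: assumes "\<gamma> \<in> SS" "inbox x" shows "adm c0 (cp \<gamma> x)"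
  unfolding adm_def
proof (intro conjI allI impI)
  fix i j assume "E (Inl i) (Inl j)"
  show "cp \<gamma> x i (Inl j) = cp \<gamma> x j (Inl i)"
    using pd_even[of \<delta> \<gamma> "x$j - x$i"] by (simp add: cp_def opinion_def)
next
  fix i v assume "E (Inl i) v"
  have g: "0 \<le> \<gamma>" "\<gamma> < eps" using assms unfolding SS_def by auto
  have h1: "\<bar>opinion x z v - x$i\<bar> \<le> RR" by (rule diff_bound[OF assms(2)])
  hence "\<bar>opinion x z v - x$i\<bar>\<^sup>2 \<le> RR\<^sup>2" by (intro power_mono) auto
  hence "\<gamma> * (opinion x z v - x$i)\<^sup>2 \<le> \<gamma> * RR\<^sup>2" using g by (simp add: mult_left_mono)
  hence "\<gamma> * (opinion x z v - x$i)\<^sup>2 \<le> 1/2" using eps_R[OF g] by linarith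
  thus "c0 \<le> cp \<gamma> x i v" unfolding cp_def using pd_lower g(1) dpos by blast
qed

definition NGv :: "real \<Rightarrow> real^'n \<Rightarrow> real^'n" where "NGv \<gamma> x = (\<chi> i. NG \<gamma> x i)"

lemma LV_inj: assumes "adm c0 c" shows "inj (LV c)"
proof (rule injI)
  fix d e assume "LV c d = LV c e"
  hence "LV c (d - e) = 0" by (simp add: LV_diff)
  hence "c0 * lam0 * norm (d - e) \<le> 0" using coercive[OF assms c0_pos, of "d - e"] by simp
  hence "norm (d - e) \<le> 0" using c0_pos lam0(1) by (simp add: mult_le_0_iff)
  thus "d = e" by simp
qed

lemma LV_surj: assumes "adm c0 c" shows "\<exists>D. LV c D = b"
  using linear_inj_imp_surj[OF LV_linear LV_inj[OF assms]] by (metis surjD)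

definition Dst :: "real \<Rightarrow> real^'n" where
  "Dst \<gamma> = (SOME D. LV (cp \<gamma> (hh \<gamma>)) D = - NGv \<gamma> (hh \<gamma>))"

lemma Dst: "\<gamma> \<in> SS \<Longrightarrow> LV (cp \<gamma> (hh \<gamma>)) (Dst \<gamma>) = - NGv \<gamma> (hh \<gamma>)"
  unfolding Dst_def by (rule someI_ex) (rule LV_surj[OF adm_cp[OF _ hh_box]])

lemma SS_eps: "\<gamma> \<in> SS \<Longrightarrow> 0 \<le> \<gamma> \<and> \<gamma> < eps" unfolding SS_def by auto

lemma key_eq: assumes "\<gamma>' \<in> SS"
  shows "LV (cs \<gamma>' (hh \<gamma>') (hh \<gamma>)) (hh \<gamma>' - hh \<gamma>) = - (\<chi> i. NN \<gamma>' (hh \<gamma>) i - NN \<gamma> (hh \<gamma>) i)"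
proof -
  have "Lap (cs \<gamma>' (hh \<gamma>') (hh \<gamma>)) (hh \<gamma>' - hh \<gamma>) i = - (NN \<gamma>' (hh \<gamma>) i - NN \<gamma> (hh \<gamma>) i)" for i
    using diff_Lap[of \<gamma>' "hh \<gamma>'" i "hh \<gamma>"] hh_NN[of \<gamma>' i] hh_NN[of \<gamma> i] by simp
  thus ?thesis by (simp add: LV_def vec_eq_iff)
qed

lemma hh_cont: assumes "\<gamma> \<in> SS" shows "(hh \<longlongrightarrow> hh \<gamma>) (at \<gamma> within SS)"
proof -
  have "((\<lambda>g. hh g - hh \<gamma>) \<longlongrightarrow> 0) (at \<gamma> within SS)"
  proof (rule coer_tendsto[of "\<lambda>g. cs g (hh g) (hh \<gamma>)"])
    show "\<forall>\<^sub>F t in at \<gamma> within SS. adm c0 (cs t (hh t) (hh \<gamma>))"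
      using ev_in by (rule eventually_mono) (use SS_eps adm_cs hh_box in blast)
    have "((\<lambda>g. - (\<chi> i. NN g (hh \<gamma>) i - NN \<gamma> (hh \<gamma>) i)) \<longlongrightarrow> - (\<chi> i. NN \<gamma> (hh \<gamma>) i - NN \<gamma> (hh \<gamma>) i)) (at \<gamma> within SS)"
      by (intro tendsto_intros cont_tendsto NN_cont_gamma)
    moreover have "(\<chi> i. (0::real)) = (0::real^'n)" by (simp add: vec_eq_iff)
    ultimately have "((\<lambda>g. - (\<chi> i. NN g (hh \<gamma>) i - NN \<gamma> (hh \<gamma>) i)) \<longlongrightarrow> 0) (at \<gamma> within SS)"
      by simp
    thus "((\<lambda>t. LV (cs t (hh t) (hh \<gamma>)) (hh t - hh \<gamma>)) \<longlongrightarrow> 0) (at \<gamma> within SS)"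
      by (rule Lim_transform_eventually) (use ev_in in \<open>rule eventually_mono\<close>, simp add: key_eq)
  qed
  thus ?thesis by (simp add: LIM_zero_iff)
qed

lemma diffop_tendsto: assumes "\<gamma> \<in> SS"
  shows "((\<lambda>g. opinion (hh g) z v - hh g $ i) \<longlongrightarrow> opinion (hh \<gamma>) z v - hh \<gamma> $ i) (at \<gamma> within SS)"
  by (intro tendsto_intros op_tendsto hh_cont assms)

lemma LV_tendsto:
  assumes "\<And>i v. E (Inl i) v \<Longrightarrow> ((\<lambda>t. c t i v) \<longlongrightarrow> c' i v) F"
  shows "((\<lambda>t. LV (c t) D) \<longlongrightarrow> LV c' D) F"
  unfolding LV_def Lap_def
proof (intro tendsto_vec_lambda tendsto_sum)
  fix i v
  show "((\<lambda>t. if E (Inl i) v then c t i v * (ext D v - D $ i) else 0) \<longlongrightarrow>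
        (if E (Inl i) v then c' i v * (ext D v - D $ i) else 0)) F"
    by (rule tendsto_if_const, rule tendsto_mult[OF assms tendsto_const])
qed

end


context sb begin

lemma LV_scale: "LV c (r *\<^sub>R d) = r *\<^sub>R LV c d"
  by (simp add: LV_def Lap_linear vec_eq_iff)

lemma zero_chi: "(\<chi> i. (0::real)) = (0::real^'n)" by (simp add: vec_eq_iff)

lemma hh_deriv: assumes g: "\<gamma> \<in> SS" shows "(hh has_vector_derivative Dst \<gamma>) (at \<gamma> within SS)"
proof (rule vecderiv_from_quot)
  let ?x = "hh \<gamma>" and ?D = "Dst \<gamma>"
  let ?c = "\<lambda>y. cs y (hh y) ?x"
  show "((\<lambda>y. (1 / (y - \<gamma>)) *\<^sub>R (hh y - ?x) - ?D) \<longlongrightarrow> 0) (at \<gamma> within SS)"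
  proof (rule coer_tendsto[of ?c])
    show "\<forall>\<^sub>F t in at \<gamma> within SS. adm c0 (?c t)"
      using ev_in by (rule eventually_mono) (use SS_eps adm_cs hh_box in blast)
    have q: "((\<lambda>y. (\<chi> i. (NN y ?x i - NN \<gamma> ?x i) / (y - \<gamma>))) \<longlongrightarrow> NGv \<gamma> ?x) (at \<gamma> within SS)"
      unfolding NGv_def
      by (intro tendsto_vec_lambda, rule NN_deriv_gamma[unfolded has_field_derivative_iff])
    have l: "((\<lambda>y. LV (?c y) ?D) \<longlongrightarrow> LV (cp \<gamma> ?x) ?D) (at \<gamma> within SS)"
    proof (rule LV_tendsto)
      fix i v
      show "((\<lambda>y. ?c y i v) \<longlongrightarrow> cp \<gamma> ?x i v) (at \<gamma> within SS)"
        unfolding cs_def cp_def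
        by (rule sec_tendsto[OF tendsto_ident_at diffop_tendsto[OF g]])
    qed
    have "((\<lambda>y. - (\<chi> i. (NN y ?x i - NN \<gamma> ?x i) / (y - \<gamma>)) - LV (?c y) ?D) \<longlongrightarrow>
             - NGv \<gamma> ?x - LV (cp \<gamma> ?x) ?D) (at \<gamma> within SS)"
      by (intro tendsto_intros q l)
    moreover have "- NGv \<gamma> ?x - LV (cp \<gamma> ?x) ?D = 0" using Dst[OF g] by simp
    ultimately have lim: "((\<lambda>y. - (\<chi> i. (NN y ?x i - NN \<gamma> ?x i) / (y - \<gamma>)) - LV (?c y) ?D) \<longlongrightarrow> 0) (at \<gamma> within SS)"
      by simp
    show "((\<lambda>y. LV (?c y) ((1 / (y - \<gamma>)) *\<^sub>R (hh y - ?x) - ?D)) \<longlongrightarrow> 0) (at \<gamma> within SS)"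
      using lim
    proof (rule Lim_transform_eventually)
      show "\<forall>\<^sub>F y in at \<gamma> within SS. - (\<chi> i. (NN y ?x i - NN \<gamma> ?x i) / (y - \<gamma>)) - LV (?c y) ?D
                 = LV (?c y) ((1 / (y - \<gamma>)) *\<^sub>R (hh y - ?x) - ?D)"
        using ev_in
      proof (rule eventually_mono)
        fix y assume y: "y \<in> SS"
        have "LV (?c y) ((1 / (y - \<gamma>)) *\<^sub>R (hh y - ?x) - ?D)
              = (1 / (y - \<gamma>)) *\<^sub>R LV (?c y) (hh y - ?x) - LV (?c y) ?D"
          by (simp add: LV_diff LV_scale)
        also have "\<dots> = (1 / (y - \<gamma>)) *\<^sub>R (- (\<chi> i. NN y ?x i - NN \<gamma> ?x i)) - LV (?c y) ?D"
          by (simp add: key_eq[OF y])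
        also have "(1 / (y - \<gamma>)) *\<^sub>R (- (\<chi> i. NN y ?x i - NN \<gamma> ?x i)) = - (\<chi> i. (NN y ?x i - NN \<gamma> ?x i) / (y - \<gamma>))"
          by (simp add: vec_eq_iff)
        finally show "- (\<chi> i. (NN y ?x i - NN \<gamma> ?x i) / (y - \<gamma>)) - LV (?c y) ?D
                 = LV (?c y) ((1 / (y - \<gamma>)) *\<^sub>R (hh y - ?x) - ?D)" by simp
      qed
    qed
  qed
qed

lemma Dst_cont: assumes g: "\<gamma> \<in> SS" shows "(Dst \<longlongrightarrow> Dst \<gamma>) (at \<gamma> within SS)"
proof -
  let ?x = "hh \<gamma>" and ?D = "Dst \<gamma>"
  let ?c = "\<lambda>y. cp y (hh y)"
  have "((\<lambda>y. Dst y - ?D) \<longlongrightarrow> 0) (at \<gamma> within SS)"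
  proof (rule coer_tendsto[of ?c])
    show "\<forall>\<^sub>F t in at \<gamma> within SS. adm c0 (?c t)"
      using ev_in by (rule eventually_mono) (use adm_cp hh_box in blast)
    have q: "((\<lambda>y. NGv y (hh y)) \<longlongrightarrow> NGv \<gamma> ?x) (at \<gamma> within SS)"
      unfolding NGv_def NG_def
    proof (intro tendsto_vec_lambda tendsto_sum)
      fix i v
      show "((\<lambda>y. if E (Inl i) v then pg \<delta> y (opinion (hh y) z v - hh y $ i) else 0) \<longlongrightarrow>
            (if E (Inl i) v then pg \<delta> \<gamma> (opinion ?x z v - ?x $ i) else 0)) (at \<gamma> within SS)"
        by (rule tendsto_if_const, rule pg_tendsto[OF tendsto_ident_at diffop_tendsto[OF g]])
    qed
    have l: "((\<lambda>y. LV (?c y) ?D) \<longlongrightarrow> LV (cp \<gamma> ?x) ?D) (at \<gamma> within SS)"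
    proof (rule LV_tendsto)
      fix i v
      show "((\<lambda>y. ?c y i v) \<longlongrightarrow> cp \<gamma> ?x i v) (at \<gamma> within SS)"
        unfolding cp_def
        by (rule pd_tendsto[OF tendsto_ident_at diffop_tendsto[OF g]])
    qed
    have "((\<lambda>y. - NGv y (hh y) - LV (?c y) ?D) \<longlongrightarrow> - NGv \<gamma> ?x - LV (cp \<gamma> ?x) ?D) (at \<gamma> within SS)"
      by (intro tendsto_intros q l)
    moreover have "- NGv \<gamma> ?x - LV (cp \<gamma> ?x) ?D = 0" using Dst[OF g] by simp
    ultimately have lim: "((\<lambda>y. - NGv y (hh y) - LV (?c y) ?D) \<longlongrightarrow> 0) (at \<gamma> within SS)"
      by simp
    show "((\<lambda>y. LV (?c y) (Dst y - ?D)) \<longlongrightarrow> 0) (at \<gamma> within SS)"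
      using lim
    proof (rule Lim_transform_eventually)
      show "\<forall>\<^sub>F y in at \<gamma> within SS. - NGv y (hh y) - LV (?c y) ?D = LV (?c y) (Dst y - ?D)"
        using ev_in by (rule eventually_mono) (simp add: LV_diff Dst)
    qed
  qed
  thus ?thesis by (simp add: LIM_zero_iff)
qed

lemma hh_C1: "C1_on_Ico eps hh"
  unfolding C1_on_Ico_def
proof (intro exI conjI ballI)
  fix t assume "t \<in> {0..<eps}"
  thus "(hh has_vector_derivative Dst t) (at t within {0..<eps})"
    using hh_deriv unfolding SS_def by blast
next
  show "continuous_on {0..<eps} Dst"
    unfolding continuous_on_def using Dst_cont unfolding SS_def by blast
qed

end


lemma aff_chain:
  assumes "\<And>y. (F has_real_derivative F' y) (at y)"
  shows "((\<lambda>t. F (a + (t - c) * b)) has_real_derivative F' a * b) (at c)"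
proof -
  have "((\<lambda>t. a + (t - c) * b) has_real_derivative b) (at c)"
    by (auto intro!: derivative_eq_intros)
  from DERIV_chain2[OF assms[of "a + (c - c) * b"] this] show ?thesis by simp
qed

lemma w_deriv_ex: "\<exists>wd. \<forall>s. ((\<lambda>s. 1 / (1 + ee \<delta> \<gamma> s)) has_real_derivative wd s) (at s)"
proof -
  have "\<forall>s. \<exists>D. ((\<lambda>s. 1 / (1 + ee \<delta> \<gamma> s)) has_real_derivative D) (at s)"
  proof
    fix s
    show "\<exists>D. ((\<lambda>s. 1 / (1 + ee \<delta> \<gamma> s)) has_real_derivative D) (at s)"
      unfolding ee_def by (rule exI) (auto intro!: derivative_eq_intros simp: ne1)
  qed
  thus ?thesis by (rule choice)
qed

context sb begin

lemma jac_entry: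
  assumes st: "steady_state E \<gamma> \<delta> z x"
  shows "jacobian_P E \<gamma> \<delta> z x $ i $ j = Lap (cp \<gamma> x) (axis j 1) i / WW \<gamma> x i"
proof -
  let ?e = "axis j (1::real)"
  let ?a = "\<lambda>v. opinion x z v - x$i" and ?b = "\<lambda>v. ext ?e v - ?e$i"
  have upd: "(\<chi> k. if k = j then t else x$k) = x + (t - x$j) *\<^sub>R ?e" for t
    by (simp add: vec_eq_iff axis_def)
  have aff: "opinion (x + s *\<^sub>R ?e) z v - (x + s *\<^sub>R ?e)$i = ?a v + s * ?b v" for s v
    by (cases v) (simp_all add: opinion_def ext_def algebra_simps)
  have Nt: "NN \<gamma> (x + (t - x$j) *\<^sub>R ?e) i = (\<Sum>v\<in>UNIV. if E (Inl i) v then ph \<delta> \<gamma> (?a v + (t - x$j) * ?b v) else 0)" for t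
    unfolding NN_def aff ..
  obtain wd where wd: "\<And>s. ((\<lambda>s. 1 / (1 + ee \<delta> \<gamma> s)) has_real_derivative wd s) (at s)"
    using w_deriv_ex by blast
  have Wt: "WW \<gamma> (x + (t - x$j) *\<^sub>R ?e) i = (\<Sum>v\<in>UNIV. if E (Inl i) v then 1 / (1 + ee \<delta> \<gamma> (?a v + (t - x$j) * ?b v)) else 0)" for t
    unfolding WW_def aff ..
  have dN: "((\<lambda>t. NN \<gamma> (x + (t - x$j) *\<^sub>R ?e) i) has_real_derivative
        (\<Sum>v\<in>UNIV. if E (Inl i) v then pd \<delta> \<gamma> (?a v) * ?b v else 0)) (at (x$j))"
    unfolding Nt by (intro DERIV_sum DERIV_if_const aff_chain ph_deriv)
  have dW: "((\<lambda>t. WW \<gamma> (x + (t - x$j) *\<^sub>R ?e) i) has_real_derivative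
        (\<Sum>v\<in>UNIV. if E (Inl i) v then wd (?a v) * ?b v else 0)) (at (x$j))"
    unfolding Wt by (intro DERIV_sum DERIV_if_const aff_chain[where F = "\<lambda>s. 1 / (1 + ee \<delta> \<gamma> s)"] wd)
  have N0: "NN \<gamma> (x + (x$j - x$j) *\<^sub>R ?e) i = 0" using st steady_iff by simp
  have W0: "WW \<gamma> (x + (x$j - x$j) *\<^sub>R ?e) i = WW \<gamma> x i" by simp
  have Wne: "WW \<gamma> (x + (x$j - x$j) *\<^sub>R ?e) i \<noteq> 0" using WW_pos[of \<gamma> x i] by simp
  have L: "(\<Sum>v\<in>UNIV. if E (Inl i) v then pd \<delta> \<gamma> (?a v) * ?b v else 0) = Lap (cp \<gamma> x) ?e i"
    unfolding Lap_def cp_def ..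
  have "((\<lambda>t. sbcm_f E \<gamma> \<delta> z (\<chi> k. if k = j then t else x$k) i) has_real_derivative
         Lap (cp \<gamma> x) ?e i / WW \<gamma> x i) (at (x$j))"
  proof -
    have "((\<lambda>t. NN \<gamma> (x + (t - x$j) *\<^sub>R ?e) i / WW \<gamma> (x + (t - x$j) *\<^sub>R ?e) i) has_real_derivative
         ((\<Sum>v\<in>UNIV. if E (Inl i) v then pd \<delta> \<gamma> (?a v) * ?b v else 0) * WW \<gamma> (x + (x$j - x$j) *\<^sub>R ?e) i
          - NN \<gamma> (x + (x$j - x$j) *\<^sub>R ?e) i * (\<Sum>v\<in>UNIV. if E (Inl i) v then wd (?a v) * ?b v else 0))
         / (WW \<gamma> (x + (x$j - x$j) *\<^sub>R ?e) i * WW \<gamma> (x + (x$j - x$j) *\<^sub>R ?e) i)) (at (x$j))"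
      by (rule DERIV_divide[OF dN dW Wne])
    also have "((\<Sum>v\<in>UNIV. if E (Inl i) v then pd \<delta> \<gamma> (?a v) * ?b v else 0) * WW \<gamma> (x + (x$j - x$j) *\<^sub>R ?e) i
          - NN \<gamma> (x + (x$j - x$j) *\<^sub>R ?e) i * (\<Sum>v\<in>UNIV. if E (Inl i) v then wd (?a v) * ?b v else 0))
         / (WW \<gamma> (x + (x$j - x$j) *\<^sub>R ?e) i * WW \<gamma> (x + (x$j - x$j) *\<^sub>R ?e) i)
        = Lap (cp \<gamma> x) ?e i / WW \<gamma> x i"
      unfolding N0 W0 L using WW_pos[of \<gamma> x i] by simp
    finally show ?thesis unfolding upd sbcm_eq .
  qed
  thus ?thesis unfolding jacobian_P_def by (simp add: DERIV_imp_deriv)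
qed

lemma Lap_expand: "Lap c d i = (\<Sum>j\<in>UNIV. d$j * Lap c (axis j 1) i)"
proof -
  have e: "ext d v - d$i = (\<Sum>j\<in>UNIV. d$j * (ext (axis j 1) v - axis j 1 $ i))" for v
  proof -
    have "(\<Sum>j\<in>UNIV. d$j * (ext (axis j 1) v - axis j 1 $ i)) =
          (\<Sum>j\<in>UNIV. d$j * ext (axis j 1) v) - (\<Sum>j\<in>UNIV. d$j * axis j 1 $ i)"
      by (simp add: right_diff_distrib sum_subtractf)
    also have "(\<Sum>j\<in>UNIV. d$j * axis j 1 $ i) = d$i" by (simp add: axis_def if_distrib cong: if_cong)
    also have "(\<Sum>j\<in>UNIV. d$j * ext (axis j 1) v) = ext d v"
      by (cases v) (simp_all add: ext_def axis_def if_distrib cong: if_cong)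
    finally show ?thesis by simp
  qed
  have "Lap c d i = (\<Sum>v\<in>UNIV. \<Sum>j\<in>UNIV. d$j * (if E (Inl i) v then c i v * (ext (axis j 1) v - axis j 1 $ i) else 0))"
    unfolding Lap_def e by (intro sum.cong refl) (simp add: sum_distrib_left algebra_simps)
  also have "\<dots> = (\<Sum>j\<in>UNIV. d$j * Lap c (axis j 1) i)"
    unfolding Lap_def by (subst sum.swap) (simp add: sum_distrib_left)
  finally show ?thesis .
qed

lemma stable:
  assumes g: "\<gamma> \<in> SS" and st: "steady_state E \<gamma> \<delta> z x"
  shows "linearly_stable E \<gamma> \<delta> z x"
  unfolding linearly_stable_def
proof (intro allI impI)
  fix \<mu> assume "is_eigenvalue (jacobian_P E \<gamma> \<delta> z x) \<mu>"
  then obtain v :: "complex^'n" where v0: "v \<noteq> 0"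
    and ev: "(\<chi> i j. complex_of_real (jacobian_P E \<gamma> \<delta> z x $ i $ j)) *v v = \<mu> *s v"
    unfolding is_eigenvalue_def by blast
  let ?c = "cp \<gamma> x"
  have bx: "inbox x" using box_principle st by blast
  have adm: "adm c0 ?c" by (rule adm_cp[OF g bx])
  define a where "a = (\<chi> j. Re (v$j))"
  define b where "b = (\<chi> j. Im (v$j))"
  define p where "p = Re \<mu>"
  define q where "q = Im \<mu>"
  let ?W = "\<lambda>i. WW \<gamma> x i"
  have comp: "(\<Sum>j\<in>UNIV. complex_of_real (Lap ?c (axis j 1) i / ?W i) * v$j) = \<mu> * v$i" for i
  proof -
    have "((\<chi> i j. complex_of_real (jacobian_P E \<gamma> \<delta> z x $ i $ j)) *v v) $ i = (\<mu> *s v) $ i"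
      using ev by simp
    thus ?thesis by (simp add: matrix_vector_mult_def jac_entry[OF st])
  qed
  have ra: "Lap ?c a i = ?W i * (p * a$i - q * b$i)" for i
  proof -
    have "Re (\<Sum>j\<in>UNIV. complex_of_real (Lap ?c (axis j 1) i / ?W i) * v$j) = Re (\<mu> * v$i)"
      using comp by simp
    hence "(\<Sum>j\<in>UNIV. Lap ?c (axis j 1) i / ?W i * a$j) = p * a$i - q * b$i"
      by (simp add: Re_sum a_def b_def p_def q_def)
    hence "(\<Sum>j\<in>UNIV. a$j * Lap ?c (axis j 1) i) / ?W i = p * a$i - q * b$i"
      by (simp add: sum_divide_distrib mult.commute)
    thus ?thesis using WW_pos[of \<gamma> x i] Lap_expand[of ?c a i] by (simp add: divide_eq_eq mult.commute)
  qed
  have rb: "Lap ?c b i = ?W i * (q * a$i + p * b$i)" for i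
  proof -
    have "Im (\<Sum>j\<in>UNIV. complex_of_real (Lap ?c (axis j 1) i / ?W i) * v$j) = Im (\<mu> * v$i)"
      using comp by simp
    hence "(\<Sum>j\<in>UNIV. Lap ?c (axis j 1) i / ?W i * b$j) = q * a$i + p * b$i"
      by (simp add: Im_sum a_def b_def p_def q_def)
    hence "(\<Sum>j\<in>UNIV. b$j * Lap ?c (axis j 1) i) / ?W i = q * a$i + p * b$i"
      by (simp add: sum_divide_distrib mult.commute)
    thus ?thesis using WW_pos[of \<gamma> x i] Lap_expand[of ?c b i] by (simp add: divide_eq_eq mult.commute)
  qed
  define P where "P = (\<Sum>i\<in>UNIV. ?W i * ((a$i)\<^sup>2 + (b$i)\<^sup>2))"
  obtain i0 where "v$i0 \<noteq> 0" using v0 by (metis vec_eq_iff zero_index)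
  hence ab0: "a$i0 \<noteq> 0 \<or> b$i0 \<noteq> 0" unfolding a_def b_def by (simp add: complex_eq_iff)
  hence "(a$i0)\<^sup>2 + (b$i0)\<^sup>2 > 0" by (simp add: sum_power2_gt_zero_iff)
  hence Ppos: "P > 0" unfolding P_def
  proof (intro sum_pos2[of UNIV i0])
    show "0 < ?W i0 * ((a$i0)\<^sup>2 + (b$i0)\<^sup>2)" using WW_pos \<open>(a$i0)\<^sup>2 + (b$i0)\<^sup>2 > 0\<close> by simp
    fix i show "0 \<le> ?W i * ((a$i)\<^sup>2 + (b$i)\<^sup>2)" using WW_pos[of \<gamma> x i] by simp
  qed simp_all
  have s1: "(\<Sum>i\<in>UNIV. a$i * Lap ?c a i) + (\<Sum>i\<in>UNIV. b$i * Lap ?c b i) = p * P"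
    unfolding ra rb P_def sum.distrib[symmetric] sum_distrib_left
    by (intro sum.cong refl) (simp add: power2_eq_square algebra_simps)
  have s2: "(\<Sum>i\<in>UNIV. b$i * Lap ?c a i) - (\<Sum>i\<in>UNIV. a$i * Lap ?c b i) = - q * P"
    unfolding ra rb P_def sum_subtractf[symmetric] sum_distrib_left
    by (intro sum.cong refl) (simp add: power2_eq_square algebra_simps)
  have "(\<Sum>i\<in>UNIV. b$i * Lap ?c a i) = (\<Sum>i\<in>UNIV. a$i * Lap ?c b i)"
    by (rule Lap_selfadj[OF adm])
  hence "q * P = 0" using s2 by simp
  hence q0: "q = 0" using Ppos by simp
  have qa: "(\<Sum>i\<in>UNIV. a$i * Lap ?c a i) \<le> - c0 * QQ a" by (rule Lap_quad[OF adm less_imp_le[OF c0_pos]])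
  have qb: "(\<Sum>i\<in>UNIV. b$i * Lap ?c b i) \<le> - c0 * QQ b" by (rule Lap_quad[OF adm less_imp_le[OF c0_pos]])
  have "a \<noteq> 0 \<or> b \<noteq> 0" using ab0 by auto
  hence "QQ a > 0 \<or> QQ b > 0" using QQ_zero QQ_nonneg by (metis order_le_less)
  hence "c0 * QQ a + c0 * QQ b > 0" using QQ_nonneg[of a] QQ_nonneg[of b] c0_pos
    by (auto intro: add_pos_nonneg add_nonneg_pos)
  hence "p * P < 0" using s1 qa qb by linarith
  hence "p < 0" using Ppos by (simp add: mult_less_0_iff)
  thus "\<mu> \<in> \<real> \<and> Re \<mu> < 0" using q0 unfolding p_def q_def by (simp add: complex_is_Real_iff)
qed

end


context sb begin

lemma main:
  assumes xb: "steady_state E 0 \<delta> z xbar"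
  shows "\<exists>\<epsilon>>0. \<exists>h. (C1_on_Ico \<epsilon> h \<and> h 0 = xbar
            \<and> (\<forall>\<gamma>\<in>{0..<\<epsilon>}. (\<exists>!x. steady_state E \<gamma> \<delta> z x) \<and> steady_state E \<gamma> \<delta> z (h \<gamma>))
            \<and> (\<forall>\<gamma>\<in>{0..<\<epsilon>}. linearly_stable E \<gamma> \<delta> z (h \<gamma>)))
          \<and> (\<forall>g. (C1_on_Ico \<epsilon> g \<and> g 0 = xbar
                  \<and> (\<forall>\<gamma>\<in>{0..<\<epsilon>}. (\<exists>!x. steady_state E \<gamma> \<delta> z x) \<and> steady_state E \<gamma> \<delta> z (g \<gamma>))
                  \<and> (\<forall>\<gamma>\<in>{0..<\<epsilon>}. linearly_stable E \<gamma> \<delta> z (g \<gamma>)))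
                 \<longrightarrow> (\<forall>t\<in>{0..<\<epsilon>}. g t = h t))"
proof (intro exI[of _ eps] conjI eps_pos exI[of _ hh] ballI allI impI hh_C1)
  have "0 \<in> SS" unfolding SS_def using eps_pos by simp
  thus "hh 0 = xbar" using hh_unique xb by metis
next
  fix \<gamma> :: real assume "\<gamma> \<in> {0..<eps}"
  hence g: "\<gamma> \<in> SS" unfolding SS_def .
  show "\<exists>!x. steady_state E \<gamma> \<delta> z x" using hh_steady hh_unique[OF g] by blast
  show "steady_state E \<gamma> \<delta> z (hh \<gamma>)" by (rule hh_steady)
  show "linearly_stable E \<gamma> \<delta> z (hh \<gamma>)" by (rule stable[OF g hh_steady])
next
  fix g :: "real \<Rightarrow> real^'n" and t :: real
  assume "C1_on_Ico eps g \<and> g 0 = xbar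
        \<and> (\<forall>\<gamma>\<in>{0..<eps}. (\<exists>!x. steady_state E \<gamma> \<delta> z x) \<and> steady_state E \<gamma> \<delta> z (g \<gamma>))
        \<and> (\<forall>\<gamma>\<in>{0..<eps}. linearly_stable E \<gamma> \<delta> z (g \<gamma>))" and t: "t \<in> {0..<eps}"
  hence "steady_state E t \<delta> z (g t)" by blast
  thus "g t = hh t" using hh_unique t unfolding SS_def by blast
qed

end

lemma zealot_edge:
  fixes E :: "'n::finite + 'm::finite \<Rightarrow> 'n + 'm \<Rightarrow> bool"
  assumes xb: "steady_state E 0 \<delta> z xbar"
    and un: "\<forall>y. steady_state E 0 \<delta> z y \<longrightarrow> y = xbar"
  shows "\<exists>i1 k. E (Inl i1) (Inr k)"
proof (rule ccontr)
  assume nz: "\<not> (\<exists>i1 k. E (Inl i1) (Inr k))"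
  define y :: "real^'n" where "y = (\<chi> i. xbar$i + 1)"
  have w: "wgt E 0 \<delta> y z = wgt E 0 \<delta> xbar z"
    by (intro ext) (simp add: wgt_def influence_def)
  have d: "wgt E 0 \<delta> y z (Inl i) v * (opinion y z v - opinion y z (Inl i)) =
           wgt E 0 \<delta> xbar z (Inl i) v * (opinion xbar z v - opinion xbar z (Inl i))" for i v
  proof (cases "E (Inl i) v")
    case True
    then obtain j where "v = Inl j" using nz by (cases v) auto
    thus ?thesis using w by (simp add: opinion_def y_def)
  next
    case False thus ?thesis by (simp add: wgt_def)
  qed
  have "steady_state E 0 \<delta> z y"
    using xb unfolding steady_state_def sbcm_f_def d unfolding w .
  hence "y = xbar" using un by blast
  moreover obtain i :: 'n where True by blast
  ultimately show False by (metis y_def vec_lambda_beta add_cancel_left_right one_neq_zero)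
qed

theorem theorem1:
  fixes E :: "'n::finite + 'm::finite \<Rightarrow> 'n + 'm \<Rightarrow> bool"
    and z :: "'m \<Rightarrow> real"
    and \<delta> :: real
    and xbar :: "real^'n"
  assumes "simple_graph E"
    and "persuadable_connected E"
    and "\<delta> \<ge> 0"
    and "steady_state E 0 \<delta> z xbar"
    and "\<forall>y. steady_state E 0 \<delta> z y \<longrightarrow> y = xbar"
  shows "\<exists>\<epsilon>>0. \<exists>h. (C1_on_Ico \<epsilon> h \<and> h 0 = xbar
            \<and> (\<forall>\<gamma>\<in>{0..<\<epsilon>}. (\<exists>!x. steady_state E \<gamma> \<delta> z x) \<and> steady_state E \<gamma> \<delta> z (h \<gamma>))
            \<and> (\<forall>\<gamma>\<in>{0..<\<epsilon>}. linearly_stable E \<gamma> \<delta> z (h \<gamma>)))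
          \<and> (\<forall>g. (C1_on_Ico \<epsilon> g \<and> g 0 = xbar
                  \<and> (\<forall>\<gamma>\<in>{0..<\<epsilon>}. (\<exists>!x. steady_state E \<gamma> \<delta> z x) \<and> steady_state E \<gamma> \<delta> z (g \<gamma>))
                  \<and> (\<forall>\<gamma>\<in>{0..<\<epsilon>}. linearly_stable E \<gamma> \<delta> z (g \<gamma>)))
                 \<longrightarrow> (\<forall>t\<in>{0..<\<epsilon>}. g t = h t))"
proof -
  have zed: "\<exists>i1 k. E (Inl i1) (Inr k)" by (rule zealot_edge[OF assms(4,5)])
  interpret sb E z \<delta> using assms(1,2,3) zed by unfold_locales
  show ?thesis by (rule main[OF assms(4)])
qed


end
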